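(* Let $P$ be a finite point set in the plane in general position and let $W$ be a finite point set with $P\cup W$ in general position. If no edge of the Delaunay triangulation $\mathrm{DT}(P)$ is an edge of $\mathrm{DG}^-(P,W)$, then $\mathrm{DG}^-(P,W)$ has no edges.
   Context: Let $P$ (the vertices) and $W$ (the witnesses) be finite point sets in $\mathbb{R}^2$; $P$ and $W$ may share points. The witness Delaunay graph $\mathrm{DG}^-(P,W)$ is the graph with vertex set $P$ in which distinct $x,y\in P$ are adjacent if and only if there is an open disk containing no point of $W$ whose bounding circle passes through $x$ and $y$. General position means that no three distinct points are collinear and no four distinct points are concyclic. For a finite point set $Q$ in general position, $\mathrm{DT}(Q)$ is its Delaunay triangulation: distinct $a,b\in Q$ are joined iff some open disk whose boundary passes through $a$ and $b$ contains no point of $Q$. *)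

theory Defs
  imports "HOL-Analysis.Analysis"
begin

type_synonym point = "real \<times> real"

definition concyclic :: "point \<Rightarrow> point \<Rightarrow> point \<Rightarrow> point \<Rightarrow> bool" where
  "concyclic a b c d \<longleftrightarrow> (\<exists>(z::point) (r::real). r > 0 \<and>
      dist a z = r \<and> dist b z = r \<and> dist c z = r \<and> dist d z = r)"

definition general_position :: "point set \<Rightarrow> bool" where
  "general_position S \<longleftrightarrow>
     (\<forall>a\<in>S. \<forall>b\<in>S. \<forall>c\<in>S. distinct [a,b,c] \<longrightarrow> \<not> collinear {a,b,c}) \<and>
     (\<forall>a\<in>S. \<forall>b\<in>S. \<forall>c\<in>S. \<forall>d\<in>S. distinct [a,b,c,d] \<longrightarrow> \<not> concyclic a b c d)"

definition empty_disk_through :: "point set \<Rightarrow> point \<Rightarrow> point \<Rightarrow> bool" where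
  "empty_disk_through W x y \<longleftrightarrow> (\<exists>(z::point) (r::real). r > 0 \<and>
      dist x z = r \<and> dist y z = r \<and> ball z r \<inter> W = {})"

definition witness_DG_edge :: "point set \<Rightarrow> point set \<Rightarrow> point \<Rightarrow> point \<Rightarrow> bool" where
  "witness_DG_edge P W x y \<longleftrightarrow> x \<in> P \<and> y \<in> P \<and> x \<noteq> y \<and> empty_disk_through W x y"

definition DT_edge :: "point set \<Rightarrow> point \<Rightarrow> point \<Rightarrow> bool" where
  "DT_edge Q a b \<longleftrightarrow> a \<in> Q \<and> b \<in> Q \<and> a \<noteq> b \<and> empty_disk_through Q a b"

end

theory Submission
  imports Defs
begin

lemma sq_id:
  fixes q x v :: "'a::real_inner"
  shows "(norm (q - (x + t *\<^sub>R v)))\<^sup>2 = (norm (q - x))\<^sup>2 - 2*t*inner (q - x) v + t\<^sup>2 * (norm v)\<^sup>2"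
proof -
  have "q - (x + t *\<^sub>R v) = (q - x) - t *\<^sub>R v" by (simp add: algebra_simps)
  moreover have "(norm (w - t *\<^sub>R v))\<^sup>2 = (norm w)\<^sup>2 - 2*t*inner w v + t\<^sup>2 * (norm v)\<^sup>2" for w
    unfolding power2_norm_eq_inner
    by (simp add: inner_diff_left inner_diff_right inner_commute power2_eq_square algebra_simps)
  ultimately show ?thesis by metis
qed

lemma shrink:
  fixes x z :: "'a::real_inner"
  assumes r: "r > 0" "dist x z = r" and fin: "finite P" and ex: "p1 \<in> P" "p1 \<in> ball z r"
  shows "\<exists>p\<in>P. p \<noteq> x \<and> (\<exists>z' r'. r' > 0 \<and> dist x z' = r' \<and> dist p z' = r'
           \<and> ball z' r' \<inter> P = {} \<and> ball z' r' \<subseteq> ball z r)"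
proof -
  define v where "v = z - x"
  have nv: "norm v = r" using r by (simp add: v_def dist_norm norm_minus_commute)
  define S where "S = {p\<in>P. inner (p - x) v > 0}"
  define f where "f p = (norm (p - x))\<^sup>2 / (2 * inner (p - x) v)" for p
  have p1id: "p1 - z = (p1 - x) - 1 *\<^sub>R v" by (simp add: v_def)
  have "(norm (p1 - z))\<^sup>2 < r\<^sup>2" using ex(2) r
    by (simp add: dist_norm norm_minus_commute power_strict_mono)
  then have h1: "(norm (p1 - x))\<^sup>2 - 2*inner (p1 - x) v < 0"
    using sq_id[of p1 x 1 v] nv by (simp add: v_def)
  then have d1: "inner (p1 - x) v > 0"
    by (smt (verit) zero_le_power2)
  have p1S: "p1 \<in> S" using d1 ex by (simp add: S_def)
  have f1: "f p1 < 1" using h1 d1 by (simp add: f_def divide_less_eq)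
  have finS: "finite S" using fin by (simp add: S_def)
  define t where "t = Min (f ` S)"
  have "t \<in> f ` S" unfolding t_def using finS p1S by (intro Min_in) auto
  then obtain p0 where p0S: "p0 \<in> S" and tp0: "t = f p0" by auto
  have tle: "\<And>q. q \<in> S \<Longrightarrow> t \<le> f q" unfolding t_def using finS by auto
  have t1: "t < 1" using tle[OF p1S] f1 by simp
  have d0: "inner (p0 - x) v > 0" using p0S by (simp add: S_def)
  have p0x: "p0 \<noteq> x" using d0 by auto
  have tpos: "t > 0" using d0 p0x by (simp add: tp0 f_def)
  have eq0: "(norm (p0 - x))\<^sup>2 = 2 * t * inner (p0 - x) v" using d0 by (simp add: tp0 f_def)
  define z' where "z' = x + t *\<^sub>R v"
  define r' where "r' = t * r"
  have "dist x z' = r'" using tpos nv by (simp add: z'_def r'_def dist_norm)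
  moreover have "dist p0 z' = r'"
  proof -
    have "(norm (p0 - z'))\<^sup>2 = (t * r)\<^sup>2" using sq_id[of p0 x t v] eq0 nv
      by (simp add: z'_def power_mult_distrib)
    then show ?thesis using tpos r
      by (simp add: dist_norm r'_def power2_eq_iff_nonneg)
  qed
  moreover have "ball z' r' \<inter> P = {}"
  proof (rule ccontr)
    assume "ball z' r' \<inter> P \<noteq> {}"
    then obtain q where q: "q \<in> P" "dist z' q < r'" by auto
    have "(norm (q - z'))\<^sup>2 < (t * r)\<^sup>2" using q tpos r
      by (simp add: dist_norm norm_minus_commute r'_def power_strict_mono)
    then have hq: "(norm (q - x))\<^sup>2 < 2*t*inner (q - x) v"
      using sq_id[of q x t v] nv by (simp add: z'_def power_mult_distrib)
    then have dq: "inner (q - x) v > 0" using tpos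
      by (smt (verit) zero_le_power2 mult_pos_pos mult_nonneg_nonpos)
    have "q \<in> S" using q dq by (simp add: S_def)
    then have "t \<le> f q" by (rule tle)
    then have "t * (2 * inner (q - x) v) \<le> (norm (q - x))\<^sup>2" using dq
      by (simp add: f_def le_divide_eq)
    then show False using hq by (simp add: algebra_simps)
  qed
  moreover have "ball z' r' \<subseteq> ball z r"
  proof
    fix w assume "w \<in> ball z' r'"
    then have a: "dist z' w < t * r" by (simp add: r'_def)
    have "dist z' z = (1 - t) * r"
    proof -
      have "z - z' = (1 - t) *\<^sub>R v" by (simp add: z'_def v_def algebra_simps)
      then show ?thesis using t1 nv by (simp add: dist_norm norm_minus_commute)
    qed
    then have "dist z w < r" using a dist_triangle[of z w z']
      by (simp add: dist_commute algebra_simps)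
    then show "w \<in> ball z r" by simp
  qed
  moreover have "r' > 0" using tpos r by (simp add: r'_def)
  ultimately show ?thesis using p0S p0x unfolding S_def by blast
qed

theorem mainTheorem13:
  fixes P W :: "point set"
  assumes "finite P" and "finite W"
    and "general_position P"
    and "general_position (P \<union> W)"
    and "\<forall>a b. DT_edge P a b \<longrightarrow> \<not> witness_DG_edge P W a b"
  shows "\<forall>x y. \<not> witness_DG_edge P W x y"
proof (intro allI notI)
  fix x y assume e: "witness_DG_edge P W x y"
  have xy: "x \<in> P" "y \<in> P" "x \<noteq> y" using e by (auto simp: witness_DG_edge_def)
  obtain z r where zr: "r > 0" "dist x z = r" "dist y z = r" "ball z r \<inter> W = {}"
    using e unfolding witness_DG_edge_def empty_disk_through_def by blast
  show False
  proof (cases "ball z r \<inter> P = {}")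
    case True
    then have "DT_edge P x y" using zr xy unfolding DT_edge_def empty_disk_through_def by blast
    then show False using assms(5) e by blast
  next
    case False
    then obtain p1 where "p1 \<in> P" "p1 \<in> ball z r" by auto
    from shrink[OF zr(1,2) assms(1) this] obtain p z' r' where
      p: "p \<in> P" "p \<noteq> x" "r' > 0" "dist x z' = r'" "dist p z' = r'"
      "ball z' r' \<inter> P = {}" "ball z' r' \<subseteq> ball z r" by blast
    have "DT_edge P x p" using p xy unfolding DT_edge_def empty_disk_through_def by blast
    moreover have "witness_DG_edge P W x p" using p xy zr(4)
      unfolding witness_DG_edge_def empty_disk_through_def by blast
    ultimately show False using assms(5) by blast
  qed
qed

end
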